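(* Let $\{\varphi_i\}_{i=1}^M\subset\mathbb{R}^N$ be a set of nonzero vectors. If the family of hyperplanes $\{\varphi_i^\perp\}_{i=1}^M$ does norm retrieval, then either $\{\varphi_i\}_{i=1}^M$ spans $\mathbb{R}^N$ or $\{\varphi_i\}_{i=1}^M$ is linearly dependent.
   Context: For a nonzero vector $\varphi\in\mathbb{R}^N$, $\varphi^\perp=\{x\in\mathbb{R}^N:\langle x,\varphi\rangle=0\}$. A family of subspaces $\{W_i\}_{i=1}^M$ of $\mathbb{R}^N$ with orthogonal projections $\{P_i\}_{i=1}^M$ does norm retrieval if for all $x,y\in\mathbb{R}^N$, $\|P_ix\|=\|P_iy\|$ for all $i$ implies $\|x\|=\|y\|$. *)

theory Defs
  imports "HOL-Analysis.Analysis"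
begin

definition perp :: "'a::real_inner \<Rightarrow> 'a set" where
  "perp v = {x. inner x v = 0}"

definition orth_proj :: "'a::euclidean_space set \<Rightarrow> 'a \<Rightarrow> 'a" where
  "orth_proj W x = (THE p. p \<in> W \<and> (\<forall>w\<in>W. inner (x - p) w = 0))"

definition norm_retrieval :: "nat \<Rightarrow> (nat \<Rightarrow> 'a::euclidean_space set) \<Rightarrow> bool" where
  "norm_retrieval M W \<longleftrightarrow>
     (\<forall>x y. (\<forall>i<M. norm (orth_proj (W i) x) = norm (orth_proj (W i) y)) \<longrightarrow> norm x = norm y)"

text \<open>Linear dependence of a finite family (repetitions count as dependence).\<close>
definition family_dependent :: "nat \<Rightarrow> (nat \<Rightarrow> 'a::real_vector) \<Rightarrow> bool" where
  "family_dependent M \<phi> \<longleftrightarrow>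
     (\<exists>c. (\<exists>i<M. c i \<noteq> 0) \<and> (\<Sum>i<M. c i *\<^sub>R \<phi> i) = 0)"

end

theory Submission
  imports Defs
begin

lemma orth_proj_perp:
  fixes v x :: "'a::euclidean_space"
  assumes "v \<noteq> 0"
  shows "orth_proj (perp v) x = x - (inner x v / inner v v) *\<^sub>R v"
proof -
  let ?p = "x - (inner x v / inner v v) *\<^sub>R v"
  have vv: "inner v v \<noteq> 0" using assms by simp
  have P: "?p \<in> perp v \<and> (\<forall>w\<in>perp v. inner (x - ?p) w = 0)"
    using vv by (auto simp: perp_def inner_diff_left inner_diff_right inner_commute)
  show ?thesis unfolding orth_proj_def
  proof (rule the_equality)
    show "?p \<in> perp v \<and> (\<forall>w\<in>perp v. inner (x - ?p) w = 0)" by (fact P)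
  next
    fix q assume q: "q \<in> perp v \<and> (\<forall>w\<in>perp v. inner (x - q) w = 0)"
    have d: "?p - q \<in> perp v" using P q by (auto simp: perp_def inner_diff_left)
    have "inner (x - q) (?p - q) = 0" using q d by blast
    moreover have "inner (x - ?p) (?p - q) = 0" using P d by blast
    moreover have e1: "(x - q) - (x - ?p) = ?p - q" by simp
    have "inner ((x - q) - (x - ?p)) (?p - q) = inner (x - q) (?p - q) - inner (x - ?p) (?p - q)"
      by (rule inner_diff_left)
    note e2 = this[unfolded e1]
    ultimately have "inner (?p - q) (?p - q) = 0"
      using e2 by simp
    then show "q = ?p" by simp
  qed
qed

lemma indep_from_not_dep:
  fixes \<phi> :: "nat \<Rightarrow> 'a::euclidean_space"
  assumes "\<not> family_dependent M \<phi>"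
  shows "inj_on \<phi> {..<M}" "\<not> dependent (\<phi> ` {..<M})"
proof -
  show inj: "inj_on \<phi> {..<M}"
  proof (rule inj_onI, rule ccontr)
    fix i k assume ik: "i \<in> {..<M}" "k \<in> {..<M}" "\<phi> i = \<phi> k" "i \<noteq> k"
    define c where "c = (\<lambda>j. if j = i then (1::real) else if j = k then -1 else 0)"
    have "(\<Sum>j<M. c j *\<^sub>R \<phi> j) = (\<Sum>j\<in>{i,k}. c j *\<^sub>R \<phi> j)"
      by (rule sum.mono_neutral_right) (use ik in \<open>auto simp: c_def\<close>)
    also have "\<dots> = 0" using ik by (simp add: c_def)
    finally have "family_dependent M \<phi>" unfolding family_dependent_def
      using ik by (intro exI[of _ c]) (auto simp: c_def)
    then show False using assms by simp
  qed
  show "\<not> dependent (\<phi> ` {..<M})"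
  proof
    assume "dependent (\<phi> ` {..<M})"
    then obtain u where u: "\<exists>v\<in>\<phi> ` {..<M}. u v \<noteq> 0" "(\<Sum>v\<in>\<phi> ` {..<M}. u v *\<^sub>R v) = 0"
      using dependent_finite[of "\<phi> ` {..<M}"] by auto
    have "(\<Sum>j<M. (u \<circ> \<phi>) j *\<^sub>R \<phi> j) = 0"
      using u(2) sum.reindex[OF inj, of "\<lambda>v. u v *\<^sub>R v"] by simp
    then have "family_dependent M \<phi>" unfolding family_dependent_def
      using u(1) by (intro exI[of _ "u \<circ> \<phi>"]) auto
    then show False using assms by simp
  qed
qed

lemma perp_vec_exists:
  fixes S :: "'a::euclidean_space set"
  assumes "w \<notin> span S"
  obtains z where "z \<noteq> 0" "\<And>s. s \<in> span S \<Longrightarrow> inner z s = 0" "inner z w = inner z z"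
proof -
  obtain y z where y: "y \<in> span S" and o: "\<And>s. s \<in> span S \<Longrightarrow> orthogonal z s" and w: "w = y + z"
    by (rule orthogonal_subspace_decomp_exists[of S w]) blast
  have "z \<noteq> 0" using assms y w by auto
  moreover have "inner z w = inner z z" using o[OF y] w by (simp add: orthogonal_def inner_add_right)
  ultimately show ?thesis using that o by (auto simp: orthogonal_def)
qed

theorem mainTheorem3:
  fixes \<phi> :: "nat \<Rightarrow> real ^ 'n" and M :: nat
  assumes nonzero: "\<forall>i<M. \<phi> i \<noteq> 0"
    and nr: "norm_retrieval M (\<lambda>i. perp (\<phi> i))"
  shows "span (\<phi> ` {..<M}) = UNIV \<or> family_dependent M \<phi>"
proof (rule ccontr)
  assume "\<not> ?thesis"
  then have ns: "span (\<phi> ` {..<M}) \<noteq> UNIV" and nd: "\<not> family_dependent M \<phi>" by auto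
  note inj = indep_from_not_dep(1)[OF nd] and ind = indep_from_not_dep(2)[OF nd]
  obtain w where "w \<notin> span (\<phi> ` {..<M})" using ns by auto
  then obtain z where z0: "z \<noteq> 0" and zperp: "\<And>s. s \<in> span (\<phi> ` {..<M}) \<Longrightarrow> inner z s = 0"
    using perp_vec_exists by blast
  have zphi: "inner z (\<phi> i) = 0" if "i < M" for i
    using zperp that by (simp add: span_base)
  have "\<exists>v. inner v (\<phi> j) \<noteq> 0 \<and> (\<forall>i<M. i \<noteq> j \<longrightarrow> inner v (\<phi> i) = 0)" if j: "j < M" for j
  proof -
    have "\<phi> j \<notin> span (\<phi> ` {..<M} - {\<phi> j})"
      using ind j unfolding dependent_def by auto
    moreover have "\<phi> ` {..<M} - {\<phi> j} = \<phi> ` ({..<M} - {j})"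
      using inj j by (auto simp: inj_on_def)
    ultimately have nin: "\<phi> j \<notin> span (\<phi> ` ({..<M} - {j}))" by simp
    obtain v where v: "v \<noteq> 0" "\<And>s. s \<in> span (\<phi> ` ({..<M} - {j})) \<Longrightarrow> inner v s = 0"
      "inner v (\<phi> j) = inner v v"
      using perp_vec_exists[OF nin] by blast
    show ?thesis
      by (rule exI[of _ v]) (use v in \<open>auto intro!: span_base\<close>)
  qed
  then obtain V where V: "\<And>j. j < M \<Longrightarrow> inner (V j) (\<phi> j) \<noteq> 0"
    "\<And>j i. j < M \<Longrightarrow> i < M \<Longrightarrow> i \<noteq> j \<Longrightarrow> inner (V j) (\<phi> i) = 0"
    by metis
  define a where "a = (\<Sum>j<M. (norm (\<phi> j) / inner (V j) (\<phi> j)) *\<^sub>R V j)"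
  have aphi: "inner a (\<phi> i) = norm (\<phi> i)" if i: "i < M" for i
  proof -
    have "inner a (\<phi> i) = (\<Sum>j<M. (norm (\<phi> j) / inner (V j) (\<phi> j)) * inner (V j) (\<phi> i))"
      unfolding a_def by (simp add: inner_sum_left)
    also have "\<dots> = (\<Sum>j\<in>{i}. (norm (\<phi> j) / inner (V j) (\<phi> j)) * inner (V j) (\<phi> j))"
      by (rule sum.mono_neutral_cong_right) (use i V in auto)
    also have "\<dots> = norm (\<phi> i)" using V(1)[OF i] by simp
    finally show ?thesis .
  qed
  have H: "\<And>x y. (\<And>i. i < M \<Longrightarrow> norm (orth_proj (perp (\<phi> i)) x) = norm (orth_proj (perp (\<phi> i)) y)) \<Longrightarrow> norm x = norm y"
    using nr unfolding norm_retrieval_def by blast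
  show False
  proof (cases "M = 0")
    case True
    have "norm (0::real^'n) = norm z"
      by (rule H) (use True in simp)
    then show False using z0 by simp
  next
    case False
    then have "0 < M" by simp
    have na: "1 \<le> norm a"
    proof -
      have "norm (\<phi> 0) \<le> norm a * norm (\<phi> 0)"
        using aphi[OF \<open>0 < M\<close>] Cauchy_Schwarz_ineq2[of a "\<phi> 0"] by simp
      moreover have "norm (\<phi> 0) > 0" using nonzero \<open>0 < M\<close> by simp
      ultimately show ?thesis by simp
    qed
    define t where "t = sqrt ((norm a)\<^sup>2 - 1)"
    define y where "y = (t / norm z) *\<^sub>R z"
    have ny: "norm y = t" using z0 na by (simp add: y_def t_def)
    have Pa: "norm (orth_proj (perp (\<phi> i)) a) = t" if i: "i < M" for i
    proof -
      have p0: "\<phi> i \<noteq> 0" using nonzero i by simp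
      define n where "n = norm (\<phi> i)"
      have n0: "n > 0" using p0 by (simp add: n_def)
      have pp: "inner (\<phi> i) (\<phi> i) = n * n" by (simp add: n_def dot_square_norm power2_eq_square)
      have ap: "inner a (\<phi> i) = n" using aphi[OF i] by (simp add: n_def)
      have "orth_proj (perp (\<phi> i)) a = a - (n / (n * n)) *\<^sub>R \<phi> i"
        using orth_proj_perp[OF p0, of a] ap pp by simp
      also have "n / (n * n) = 1 / n" using n0 by simp
      finally have op: "orth_proj (perp (\<phi> i)) a = a - (1 / n) *\<^sub>R \<phi> i" .
      have "inner (a - (1 / n) *\<^sub>R \<phi> i) (a - (1 / n) *\<^sub>R \<phi> i)
          = inner a a - 2 * (1 / n) * inner a (\<phi> i) + (1 / n) * (1 / n) * inner (\<phi> i) (\<phi> i)"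
        by (simp add: inner_diff_left inner_diff_right inner_commute algebra_simps)
      also have "\<dots> = inner a a - 1" using ap pp n0 by simp
      finally have "(norm (a - (1 / n) *\<^sub>R \<phi> i))\<^sup>2 = (norm a)\<^sup>2 - 1"
        by (simp add: power2_norm_eq_inner)
      then show ?thesis unfolding t_def op using real_sqrt_unique norm_ge_zero by metis
    qed
    have Py: "norm (orth_proj (perp (\<phi> i)) y) = t" if i: "i < M" for i
    proof -
      have p0: "\<phi> i \<noteq> 0" using nonzero i by simp
      have "inner y (\<phi> i) = 0" using zphi[OF i] by (simp add: y_def)
      then show ?thesis using orth_proj_perp[OF p0, of y] ny by simp
    qed
    have "norm a = norm y"
      by (rule H) (simp add: Pa Py)
    then have "(norm a)\<^sup>2 = t\<^sup>2" using ny by simp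
    also have "t\<^sup>2 = (norm a)\<^sup>2 - 1" unfolding t_def
      using na by (simp add: one_le_power)
    finally have "(norm a)\<^sup>2 = (norm a)\<^sup>2 - 1" .
    then show False by simp
  qed
qed

end
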